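(* Let $r>0$ and $h<0$. There exists $\boldsymbol{\phi}\in C_c^\infty(\mathbb{R}^2;\mathbb{R}^3)$ such that $$E_{r,h}\Big[\frac{\mathbf{e}_3+t\boldsymbol{\phi}}{|\mathbf{e}_3+t\boldsymbol{\phi}|}\Big]<E_{r,h}[\mathbf{e}_3]=0$$ for all sufficiently small $t\in\mathbb{R}$ with $t\neq0$.
   Context: Maps $\mathbf{n}=(n_1,n_2,n_3):\mathbb{R}^2\to\mathbb{S}^2\subset\mathbb{R}^3$; $\mathbf{e}_3=(0,0,1)$. $D[\mathbf{n}]=\frac12\int|\nabla\mathbf{n}|^2dx$, $H[\mathbf{n}]=\int(\mathbf{n}-\mathbf{e}_3)\cdot(\nabla\times\mathbf{n})dx$ with $\nabla\times\mathbf{n}=(\partial_2n_3,-\partial_1n_3,\partial_1n_2-\partial_2n_1)$, $V[\mathbf{n}]=\frac18\int|\mathbf{n}-\mathbf{e}_3|^4dx$, $Z[\mathbf{n}]=\int(1-n_3)dx$ (integrals over $\mathbb{R}^2$), and $E_{r,h}=D+rH+V+hZ$. *)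

theory Defs
  imports "HOL-Analysis.Analysis"
begin

text \<open>Maps R^2 -> R^3 are modelled as functions real^2 \<Rightarrow> real^3.
  Coordinates of real^2 are indexed by 1,2 and of real^3 by 1,2,3.\<close>

definition e3 :: "real^3" where
  "e3 = vector [0, 0, 1]"

definition pd :: "(real^2 \<Rightarrow> real^3) \<Rightarrow> 2 \<Rightarrow> real^2 \<Rightarrow> real^3" where
  "pd n j x = frechet_derivative n (at x) (axis j 1)"

text \<open>Smoothness (C-infinity): all iterated partial derivatives exist (as Frechet derivatives).\<close>
definition smooth_map :: "(real^2 \<Rightarrow> real^3) \<Rightarrow> bool" where
  "smooth_map f \<longleftrightarrow> (\<exists>S. f \<in> S \<and>
      (\<forall>g\<in>S. (\<forall>x. g differentiable (at x)) \<and> (\<forall>j. pd g j \<in> S)))"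

definition compact_support :: "(real^2 \<Rightarrow> real^3) \<Rightarrow> bool" where
  "compact_support f \<longleftrightarrow> compact (closure {x. f x \<noteq> 0})"

definition curl :: "(real^2 \<Rightarrow> real^3) \<Rightarrow> real^2 \<Rightarrow> real^3" where
  "curl n x = vector [pd n 2 x $ 3, - (pd n 1 x $ 3), pd n 1 x $ 2 - pd n 2 x $ 1]"

definition Dir :: "(real^2 \<Rightarrow> real^3) \<Rightarrow> real" where
  "Dir n = 1/2 * (\<integral>x. (norm (pd n 1 x))\<^sup>2 + (norm (pd n 2 x))\<^sup>2 \<partial>lborel)"

definition Hel :: "(real^2 \<Rightarrow> real^3) \<Rightarrow> real" where
  "Hel n = (\<integral>x. (n x - e3) \<bullet> curl n x \<partial>lborel)"

definition Pot :: "(real^2 \<Rightarrow> real^3) \<Rightarrow> real" where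
  "Pot n = 1/8 * (\<integral>x. (norm (n x - e3)) ^ 4 \<partial>lborel)"

definition Zee :: "(real^2 \<Rightarrow> real^3) \<Rightarrow> real" where
  "Zee n = (\<integral>x. 1 - n x $ 3 \<partial>lborel)"

definition Energy :: "real \<Rightarrow> real \<Rightarrow> (real^2 \<Rightarrow> real^3) \<Rightarrow> real" where
  "Energy r h n = Dir n + r * Hel n + Pot n + h * Zee n"

end

theory Submission
  imports Defs
begin


definition psi :: "nat \<Rightarrow> real \<Rightarrow> real" where
  "psi k s = (if s > 0 then exp (-1/s) / s^k else 0)"

lemma psi_deriv: "(psi k has_real_derivative (psi (k+2) s - real k * psi (k+1) s)) (at s)"
proof (cases "s > 0")
  case True
  have "((\<lambda>s. exp (-1/s) / s^k) has_real_derivative (psi (k+2) s - real k * psi (k+1) s)) (at s)"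
    using True
    apply (auto intro!: derivative_eq_intros simp: psi_def)
    apply (simp add: field_simps power_Suc)
    apply (cases k, auto)
    done
  then show ?thesis
    apply (rule has_field_derivative_transform_within_open[where S="{0<..}"])
    using True by (auto simp: psi_def)
next
  case False
  show ?thesis
  proof (cases "s < 0")
    case True
    have "((\<lambda>s. 0) has_real_derivative (psi (k+2) s - real k * psi (k+1) s)) (at s)"
      using True by (auto intro!: derivative_eq_intros simp: psi_def)
    then show ?thesis
      apply (rule has_field_derivative_transform_within_open[where S="{..<0}"])
      using True by (auto simp: psi_def)
  next
    case False
    with \<open>\<not> s > 0\<close> have s: "s = 0" by simp
    have r: "((\<lambda>y. (psi k y - psi k 0) / (y - 0)) \<longlongrightarrow> 0) (at_right 0)"
    proof -
      have "((\<lambda>y::real. (inverse y)^(Suc k) / exp (inverse y)) \<longlongrightarrow> 0) (at_right 0)"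
        by (rule filterlim_compose[OF tendsto_power_div_exp_0 filterlim_inverse_at_top_right])
      then have "((\<lambda>y::real. exp (-1/y) / y^k / y) \<longlongrightarrow> 0) (at_right 0)"
        apply (rule tendsto_cong[THEN iffD1, rotated])
        using eventually_at_right_less[of "0::real"] by eventually_elim (auto simp: exp_minus field_simps power_inverse)
      then show ?thesis
        apply (rule tendsto_cong[THEN iffD1, rotated])
        using eventually_at_right_less[of "0::real"] by eventually_elim (auto simp: psi_def)
    qed
    have l: "((\<lambda>y. (psi k y - psi k 0) / (y - 0)) \<longlongrightarrow> 0) (at_left 0)"
    proof -
      have "((\<lambda>y. 0::real) \<longlongrightarrow> 0) (at_left 0)" by simp
      then show ?thesis
        apply (rule tendsto_cong[THEN iffD1, rotated])
        by (rule eventually_mono[OF eventually_at_left_real[of "-1::real" 0]]) (auto simp: psi_def)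
    qed
    have "((\<lambda>y. (psi k y - psi k 0) / (y - 0)) \<longlongrightarrow> 0) (at 0)"
      using l r by (rule filterlim_split_at)
    then show ?thesis using s by (simp add: has_field_derivative_iff psi_def)
  qed
qed


lemma psi_cont[continuous_intros]: "continuous_on A (\<lambda>x. psi k (g x))" if "continuous_on A g"
proof -
  have "continuous_on UNIV (psi k)"
    using psi_deriv by (meson DERIV_isCont continuous_at_imp_continuous_on)
  then show ?thesis using continuous_on_compose2[OF _ that] by blast
qed

inductive_set Sm :: "(real^2 \<Rightarrow> real) set" where
  const: "(\<lambda>x. c) \<in> Sm"
| coord: "(\<lambda>x. x $ i) \<in> Sm"
| add: "f \<in> Sm \<Longrightarrow> g \<in> Sm \<Longrightarrow> (\<lambda>x. f x + g x) \<in> Sm"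
| mult: "f \<in> Sm \<Longrightarrow> g \<in> Sm \<Longrightarrow> (\<lambda>x. f x * g x) \<in> Sm"
| comp: "f \<in> Sm \<Longrightarrow> (\<lambda>x. psi k (f x)) \<in> Sm"

lemma Sm_deriv:
  assumes "f \<in> Sm"
  shows "\<exists>D. (\<forall>x. (f has_derivative D x) (at x)) \<and> (\<forall>v. (\<lambda>x. D x v) \<in> Sm)"
  using assms
proof induction
  case (const c)
  show ?case by (rule exI[of _ "\<lambda>x h. 0"]) (auto intro: Sm.const)
next
  case (coord i)
  show ?case
    by (rule exI[of _ "\<lambda>x h. h $ i"])
       (auto intro: Sm.const bounded_linear_imp_has_derivative bounded_linear_vec_nth)
next
  case (add f g)
  then obtain D1 D2 where "\<forall>x. (f has_derivative D1 x) (at x)" "\<forall>v. (\<lambda>x. D1 x v) \<in> Sm"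
    "\<forall>x. (g has_derivative D2 x) (at x)" "\<forall>v. (\<lambda>x. D2 x v) \<in> Sm" by blast
  then show ?case
    by (intro exI[of _ "\<lambda>x h. D1 x h + D2 x h"]) (auto intro!: Sm.add has_derivative_add)
next
  case (mult f g)
  then obtain D1 D2 where "\<forall>x. (f has_derivative D1 x) (at x)" "\<forall>v. (\<lambda>x. D1 x v) \<in> Sm"
    "\<forall>x. (g has_derivative D2 x) (at x)" "\<forall>v. (\<lambda>x. D2 x v) \<in> Sm" by blast
  then show ?case
    by (intro exI[of _ "\<lambda>x h. f x * D2 x h + D1 x h * g x"])
       (auto intro!: Sm.add Sm.mult has_derivative_mult mult)
next
  case (comp f k)
  then obtain D1 where D1: "\<forall>x. (f has_derivative D1 x) (at x)" "\<forall>v. (\<lambda>x. D1 x v) \<in> Sm" by blast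
  let ?d = "\<lambda>y. psi (k+2) y - real k * psi (k+1) y"
  have "((\<lambda>x. psi k (f x)) has_derivative (\<lambda>h. ?d (f x) * D1 x h)) (at x)" for x
    using has_derivative_compose[OF D1(1)[rule_format, of x]
        has_field_derivative_imp_has_derivative[OF psi_deriv]] by simp
  moreover have "(\<lambda>x. ?d (f x) * D1 x v) \<in> Sm" for v
  proof -
    have "(\<lambda>x. (psi (k+2) (f x) + (- real k) * psi (k+1) (f x)) * D1 x v) \<in> Sm"
      using comp D1 by (intro Sm.intros) auto
    then show ?thesis by simp
  qed
  ultimately show ?case
    by (intro exI[of _ "\<lambda>x h. ?d (f x) * D1 x h"]) auto
qed

definition E1 :: "real^3" where "E1 = vector [1, 0, 0]"

lemma Sm_smooth:
  assumes "g \<in> Sm"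
  shows "smooth_map (\<lambda>x. g x *\<^sub>R E1)"
proof -
  let ?S = "{(\<lambda>x. g x *\<^sub>R E1) | g. g \<in> Sm}"
  have "\<forall>h\<in>?S. (\<forall>x. h differentiable (at x)) \<and> (\<forall>j. pd h j \<in> ?S)"
  proof
    fix h assume "h \<in> ?S"
    then obtain g where g: "g \<in> Sm" and h: "h = (\<lambda>x. g x *\<^sub>R E1)" by auto
    obtain D where D: "\<forall>x. (g has_derivative D x) (at x)" "\<forall>v. (\<lambda>x. D x v) \<in> Sm"
      using Sm_deriv[OF g] by blast
    have hd: "(h has_derivative (\<lambda>v. D x v *\<^sub>R E1)) (at x)" for x
      unfolding h by (rule has_derivative_scaleR_left[OF D(1)[rule_format]])
    have pdh: "pd h j = (\<lambda>x. D x (axis j 1) *\<^sub>R E1)" for j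
    proof -
      have "frechet_derivative h (at x) = (\<lambda>v. D x v *\<^sub>R E1)" for x
        using frechet_derivative_at[OF hd] by simp
      then show ?thesis unfolding pd_def by (intro ext) simp
    qed
    have "\<forall>x. h differentiable (at x)"
      using hd unfolding differentiable_def by blast
    moreover have "pd h j \<in> ?S" for j
    proof -
      have a: "pd h j = (\<lambda>x. (\<lambda>x. D x (axis j 1)) x *\<^sub>R E1)" using pdh by simp
      have b: "(\<lambda>x. D x (axis j 1)) \<in> Sm" using D(2) by blast
      show ?thesis by (intro CollectI exI[of _ "\<lambda>x. D x (axis j 1)"] conjI a b)
    qed
    ultimately show "(\<forall>x. h differentiable (at x)) \<and> (\<forall>j. pd h j \<in> ?S)"
      by (intro conjI allI) auto
  qed
  moreover have "(\<lambda>x. g x *\<^sub>R E1) \<in> ?S" using assms by auto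
  ultimately show ?thesis unfolding smooth_map_def by (intro exI[of _ ?S] conjI)
qed




lemma has_derivative_vecnth[derivative_intros]: "((\<lambda>x. x $ i) has_derivative (\<lambda>h. h $ i)) F"
  by (intro bounded_linear_imp_has_derivative bounded_linear_vec_nth)

definition G :: "real \<Rightarrow> real^2 \<Rightarrow> real" where
  "G R x = 1 - inverse (R^2) * (x$1^2 + x$2^2)"
definition fR :: "real \<Rightarrow> real^2 \<Rightarrow> real" where
  "fR R x = psi 0 (G R x)"
definition pf :: "real \<Rightarrow> 2 \<Rightarrow> real^2 \<Rightarrow> real" where
  "pf R j x = psi 2 (G R x) * (-2 * inverse (R^2) * x$j)"

lemma fR_Sm: "fR R \<in> Sm"
proof -
  have "(\<lambda>x. psi 0 ((\<lambda>x. 1 + (- inverse (R^2)) * (x$1*x$1 + x$2*x$2)) x)) \<in> Sm"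
    by (intro Sm.intros)
  moreover have "(\<lambda>x. psi 0 ((\<lambda>x. 1 + (- inverse (R^2)) * (x$1*x$1 + x$2*x$2)) x)) = fR R"
    by (rule ext) (simp add: fR_def G_def power2_eq_square)
  ultimately show ?thesis by simp
qed

lemma fR_deriv:
  "(fR R has_derivative (\<lambda>h. psi 2 (G R x) * (-2 * inverse (R^2) * (x$1*h$1 + x$2*h$2)))) (at x)"
proof -
  have g: "(G R has_derivative (\<lambda>h. -2 * (x$1*h$1 + x$2*h$2) / R^2)) (at x)"
    unfolding G_def[abs_def]
    by (auto intro!: derivative_eq_intros simp: fun_eq_iff divide_inverse algebra_simps)
  have "((\<lambda>x. psi 0 (G R x)) has_derivative (\<lambda>h. (psi (0+2) (G R x) - real 0 * psi (0+1) (G R x)) * (-2 * inverse (R^2) * (x$1*h$1 + x$2*h$2)))) (at x)"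
    by (rule has_derivative_eq_rhs[OF has_derivative_compose[OF g has_field_derivative_imp_has_derivative[OF psi_deriv[of 0]]]])
       (simp add: fun_eq_iff divide_inverse algebra_simps)
  then show ?thesis unfolding fR_def[abs_def] by (simp add: numeral_2_eq_2)
qed

lemma fR_pd: "frechet_derivative (fR R) (at x) (axis j 1) = pf R j x"
proof -
  have "frechet_derivative (fR R) (at x) = (\<lambda>h. psi 2 (G R x) * (-2 * inverse (R^2) * (x$1*h$1 + x$2*h$2)))"
    using frechet_derivative_at[OF fR_deriv] by metis
  then show ?thesis
    using exhaust_2[of j] by (auto simp: pf_def axis_def)
qed

lemma G_even: "G R (-x) = G R x" by (simp add: G_def)
lemma fR_even: "fR R (-x) = fR R x" by (simp add: fR_def G_even)
lemma pf_odd: "pf R j (-x) = - pf R j x" by (simp add: pf_def G_even)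

definition N :: "real \<Rightarrow> real^3" where
  "N s = (s / sqrt (1 + s^2)) *\<^sub>R E1 + (1 / sqrt (1 + s^2)) *\<^sub>R e3"
definition N' :: "real \<Rightarrow> real^3" where
  "N' s = (1 / (sqrt (1 + s^2) * (1 + s^2))) *\<^sub>R E1 + (- s / (sqrt (1 + s^2) * (1 + s^2))) *\<^sub>R e3"

lemma N_deriv: "(N has_derivative (\<lambda>d. d *\<^sub>R N' s)) (at s)"
proof -
  have p: "0 < 1 + s^2" by (simp add: add_pos_nonneg)
  define q where "q = sqrt (1 + s^2)"
  have q: "q > 0" "q * q = 1 + s^2" using p by (auto simp: q_def)
  have "(N has_derivative (\<lambda>d. ((d * q - d * (s * (s * inverse q))) / (1 + s^2)) *\<^sub>R E1 - (d * (s * inverse q) / (1 + s^2)) *\<^sub>R e3)) (at s)"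
    unfolding N_def[abs_def] q_def using p
    by (auto intro!: derivative_eq_intros simp: algebra_simps)
  moreover have "(\<lambda>d. ((d * q - d * (s * (s * inverse q))) / (1 + s^2)) *\<^sub>R E1 - (d * (s * inverse q) / (1 + s^2)) *\<^sub>R e3) = (\<lambda>d. d *\<^sub>R N' s)"
  proof (rule ext)
    fix d
    have "(d * q - d * (s * (s * inverse q))) / (1 + s^2) = d * (1 / (q * (1 + s^2)))"
      using q by (simp add: field_simps) (simp add: algebra_simps power2_eq_square q(2)[symmetric])
    moreover have "d * (s * inverse q) / (1 + s^2) = - d * (- s / (q * (1 + s^2)))"
      using q p by (simp add: field_simps power2_eq_square)
    ultimately show "((d * q - d * (s * (s * inverse q))) / (1 + s^2)) *\<^sub>R E1 - (d * (s * inverse q) / (1 + s^2)) *\<^sub>R e3 = d *\<^sub>R N' s"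
      unfolding N'_def q_def[symmetric] by (simp add: scaleR_add_right algebra_simps)
  qed
  ultimately show ?thesis by simp
qed



definition nt :: "real \<Rightarrow> real \<Rightarrow> real^2 \<Rightarrow> real^3" where
  "nt R t x = N (t * fR R x)"

lemma nt_deriv:
  "(nt R t has_derivative (\<lambda>h. (t * frechet_derivative (fR R) (at x) h) *\<^sub>R N' (t * fR R x))) (at x)"
proof -
  have fd: "(fR R has_derivative frechet_derivative (fR R) (at x)) (at x)"
    using fR_deriv frechet_derivative_at by (metis (no_types, lifting))
  have "((\<lambda>x. t * fR R x) has_derivative (\<lambda>h. t * frechet_derivative (fR R) (at x) h)) (at x)"
    by (rule has_derivative_mult_right[OF fd])
  from has_derivative_compose[OF this N_deriv]
  show ?thesis unfolding nt_def[abs_def] .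
qed

lemma nt_pd: "pd (nt R t) j x = (t * pf R j x) *\<^sub>R N' (t * fR R x)"
proof -
  have "frechet_derivative (nt R t) (at x) = (\<lambda>h. (t * frechet_derivative (fR R) (at x) h) *\<^sub>R N' (t * fR R x))"
    using frechet_derivative_at[OF nt_deriv] by simp
  then show ?thesis by (simp add: pd_def fR_pd)
qed

lemma norm_E1e3_sq: "(norm (u *\<^sub>R E1 + v *\<^sub>R e3))^2 = u^2 + v^2"
  unfolding power2_norm_eq_inner by (simp add: inner_vec_def sum_3 E1_def e3_def power2_eq_square)

lemma N_eq: "(e3 + s *\<^sub>R E1) /\<^sub>R norm (e3 + s *\<^sub>R E1) = N s"
proof -
  have "norm (e3 + s *\<^sub>R E1) = sqrt (1 + s^2)"
    using norm_E1e3_sq[of s 1] by (simp add: add.commute real_sqrt_unique[symmetric])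
  then show ?thesis by (simp add: N_def scaleR_add_right algebra_simps divide_inverse)
qed

lemma lam_eq: "(\<lambda>x. (e3 + t *\<^sub>R (fR R x *\<^sub>R E1)) /\<^sub>R norm (e3 + t *\<^sub>R (fR R x *\<^sub>R E1))) = nt R t"
  using N_eq by (simp add: nt_def fun_eq_iff)

lemma pd_const: "pd (\<lambda>x. c) j x = 0"
proof -
  have "frechet_derivative (\<lambda>x. c) (at x) = (\<lambda>h. 0)"
    using frechet_derivative_at[OF has_derivative_const] by simp
  then show ?thesis by (simp add: pd_def)
qed

lemma e3_3: "e3 $ 3 = 1" by (simp add: e3_def)

lemma Energy_e3: "Energy r h (\<lambda>x. e3) = 0"
  by (simp add: Energy_def Dir_def Hel_def Pot_def Zee_def pd_const e3_3)

lemma odd_integral_zero: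
  fixes F :: "real^2 \<Rightarrow> real"
  assumes odd: "\<And>x. F (-x) = - F x"
  shows "integral\<^sup>L lborel F = 0"
proof (cases "integrable lborel F")
  case True
  then have [measurable]: "F \<in> borel_measurable borel"
    using borel_measurable_integrable[OF True] by simp
  have "integral\<^sup>L lborel F = integral\<^sup>L (density (distr lborel borel (\<lambda>x. 0 + (-1) *\<^sub>R x)) (\<lambda>_. \<bar>-1::real\<bar>^DIM(real^2))) F"
    using lborel_affine[of "-1::real" "0::real^2"] by simp
  also have "\<dots> = integral\<^sup>L lborel (\<lambda>x. F (-x))"
    by (simp add: density_1 integral_distr)
  also have "\<dots> = - integral\<^sup>L lborel F" by (simp add: odd)
  finally show ?thesis by simp
next
  case False
  then show ?thesis by (rule not_integrable_integral_eq)
qed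

lemma nt_even: "nt R t (-x) = nt R t x" by (simp add: nt_def fR_even)
lemma pd_nt_odd: "pd (nt R t) j (-x) = - pd (nt R t) j x"
  by (simp add: nt_pd fR_even pf_odd)

lemma Hel_nt: "Hel (nt R t) = 0"
  unfolding Hel_def
proof (rule odd_integral_zero)
  fix x :: "real^2"
  have "curl (nt R t) (-x) = - curl (nt R t) x"
    by (simp add: curl_def pd_nt_odd vec_eq_iff forall_3)
  then show "(nt R t (-x) - e3) \<bullet> curl (nt R t) (-x) = - ((nt R t x - e3) \<bullet> curl (nt R t) x)"
    by (simp add: nt_even)
qed



lemma psi_nonneg: "0 \<le> psi k y" by (simp add: psi_def)
lemma psi_zero: "y \<le> 0 \<Longrightarrow> psi k y = 0" by (simp add: psi_def)
lemma psi0_le1: "psi 0 y \<le> 1" by (simp add: psi_def)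
lemma psi0_ge: assumes "y \<ge> 1/2" shows "psi 0 y \<ge> exp (-2)"
proof -
  have "y > 0" using assms by simp
  have "-1/y \<ge> -2" using assms \<open>y > 0\<close> by (simp add: field_simps)
  then show ?thesis using \<open>y > 0\<close> by (simp add: psi_def)
qed
lemma psi2_le4: "psi 2 y \<le> 4"
proof (cases "y > 0")
  case True
  define z where "z = 1 / y"
  have z: "z > 0" using True by (simp add: z_def)
  have "1 + z/2 \<le> exp (z/2)" by (rule exp_ge_add_one_self)
  then have "z/2 \<le> exp (z/2)" by linarith
  then have "(z/2)^2 \<le> (exp (z/2))^2" using z by (intro power_mono) auto
  also have "(exp (z/2))^2 = exp z" by (simp add: exp_double[symmetric] power2_eq_square exp_add[symmetric])
  finally have "z^2 \<le> 4 * exp z" by (simp add: power_divide)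
  then have "z^2 / exp z \<le> 4" by (simp add: divide_le_eq)
  moreover have "psi 2 y = z^2 / exp z"
    using True by (simp add: psi_def z_def exp_minus field_simps)
  ultimately show ?thesis by simp
qed (simp add: psi_def)

definition Q :: "real \<Rightarrow> (real^2) set" where
  "Q R = cbox (- (\<chi> i. R)) (\<chi> i. R)"

lemma measure_Q: assumes "R > 0" shows "measure lborel (Q R) = 4 * R^2"
proof -
  have "cbox (- (\<chi> i. R)) (\<chi> i::2. R) \<noteq> {}" using assms by (simp add: interval_ne_empty_cart)
  then show ?thesis unfolding Q_def using assms
    by (simp add: content_cbox_cart UNIV_2 power2_eq_square)
qed

lemma outside_Q: assumes "R > 0" "x \<notin> Q R" shows "G R x \<le> 0"
proof -
  obtain i where "\<not> (- R \<le> x $ i \<and> x $ i \<le> R)" using assms(2) by (auto simp: Q_def mem_box_cart)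
  then have "R < \<bar>x $ i\<bar>" by auto
  then have "R^2 < \<bar>x $ i\<bar>^2" using assms(1)
    by (intro power_strict_mono) auto
  then have "R^2 < (x $ i)^2" by simp
  moreover have "i = 1 \<or> i = 2" by (rule exhaust_2)
  moreover have "(x$i)^2 \<le> x$1^2 + x$2^2"
  proof -
    have "0 \<le> (x$1)^2" "0 \<le> (x$2)^2" by simp_all
    then show ?thesis using exhaust_2[of i] by (elim disjE) simp_all
  qed
  ultimately have "R^2 \<le> x$1^2 + x$2^2" by simp
  then have "1 \<le> inverse (R^2) * (x$1^2 + x$2^2)" using assms(1)
    by (simp add: field_simps)
  then show ?thesis by (simp add: G_def)
qed

lemma in_Q2: assumes "R > 0" "x \<in> Q (R/2)" shows "G R x \<ge> 1/2"
proof -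
  have "\<bar>x$i\<bar> \<le> R/2" for i
  proof -
    have "- (R/2) \<le> x$i \<and> x$i \<le> R/2" using assms(2) unfolding Q_def mem_box_cart by simp
    then show ?thesis by arith
  qed
  then have "\<bar>x$i\<bar>^2 \<le> (R/2)^2" for i
    by (intro power_mono) auto
  then have "(x$i)^2 \<le> R^2/4" for i by (simp add: power_divide)
  from this[of 1] this[of 2] have "x$1^2 + x$2^2 \<le> R^2/2" by simp
  then have "inverse (R^2) * (x$1^2 + x$2^2) \<le> 1/2" using assms(1)
    by (simp add: field_simps)
  then show ?thesis by (simp add: G_def)
qed

lemma fR_cont: "continuous_on UNIV (fR R)"
  unfolding fR_def[abs_def] G_def by (intro continuous_intros)

lemma fR_outside: "R > 0 \<Longrightarrow> x \<notin> Q R \<Longrightarrow> fR R x = 0"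
  using outside_Q psi_zero by (simp add: fR_def)

lemma fR_bounds: "0 \<le> fR R x" "fR R x \<le> 1"
  by (simp_all add: fR_def psi_nonneg psi0_le1)



lemma integral_const_indicator_Q:
  assumes "R > 0"
  shows "integrable lborel (\<lambda>x. c * indicator (Q R) x :: real)"
    and "(\<integral>x. c * indicator (Q R) x \<partial>lborel) = c * (4 * R^2)"
proof -
  have i: "integrable lborel (indicator (Q R) :: real^2 \<Rightarrow> real)"
    unfolding Q_def by (intro integrable_real_indicator) (use emeasure_lborel_cbox_finite in auto)
  then show "integrable lborel (\<lambda>x. c * indicator (Q R) x :: real)" by simp
  show "(\<integral>x. c * indicator (Q R) x \<partial>lborel) = c * (4 * R^2)"
    using measure_Q[OF assms] by simp
qed

lemma norm_N'_sq: "(norm (N' s))^2 \<le> 1"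
proof -
  have p: "1 \<le> 1 + s^2" by simp
  define q where "q = sqrt (1 + s^2)"
  have q: "q \<ge> 1" "q^2 = 1 + s^2" using p by (auto simp: q_def)
  have "(norm (N' s))^2 = (1 / (q * (1 + s^2)))^2 + (- s / (q * (1 + s^2)))^2"
    unfolding N'_def q_def[symmetric] by (rule norm_E1e3_sq)
  also have "\<dots> = (1 + s^2) / (q^2 * (1 + s^2)^2)"
    by (simp add: power_divide power_mult_distrib add_divide_distrib)
  also have "\<dots> = 1 / (1 + s^2)^2"
    using q p by (simp add: power2_eq_square)
  also have "\<dots> \<le> 1" using p by (simp add: divide_le_eq one_le_power)
  finally show ?thesis .
qed

lemma pf_sq_bound:
  assumes "R > 0"
  shows "(pf R 1 x)^2 + (pf R 2 x)^2 \<le> 64 / R^2 * indicator (Q R) x"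
proof (cases "G R x > 0")
  case False
  then show ?thesis by (simp add: pf_def psi_zero)
next
  case True
  then have xQ: "x \<in> Q R" using outside_Q[OF assms] by force
  have lt: "inverse (R^2) * (x$1^2 + x$2^2) < 1" using True by (simp add: G_def)
  have "(pf R 1 x)^2 + (pf R 2 x)^2 = (psi 2 (G R x))^2 * (4 * inverse (R^2)) * (inverse (R^2) * (x$1^2 + x$2^2))"
    by (simp add: pf_def power_mult_distrib algebra_simps power2_eq_square)
  also have "\<dots> \<le> 16 * (4 * inverse (R^2)) * 1"
  proof (intro mult_mono)
    have "(psi 2 (G R x))^2 \<le> 4^2" by (intro power_mono psi2_le4 psi_nonneg)
    then show "(psi 2 (G R x))^2 \<le> 16" by simp
  qed (use lt in auto)
  also have "\<dots> = 64 / R^2 * indicator (Q R) x" using xQ by (simp add: divide_inverse)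
  finally show ?thesis .
qed

lemma Dir_bound:
  assumes "R > 0"
  shows "Dir (nt R t) \<le> 128 * t^2"
proof -
  have pt: "(norm (pd (nt R t) j x))^2 \<le> t^2 * (pf R j x)^2" for j x
  proof -
    have "(norm (pd (nt R t) j x))^2 = (t * pf R j x)^2 * (norm (N' (t * fR R x)))^2"
      by (simp add: nt_pd power_mult_distrib)
    also have "\<dots> \<le> (t * pf R j x)^2 * 1"
      by (intro mult_left_mono norm_N'_sq) simp
    finally show ?thesis by (simp add: power_mult_distrib)
  qed
  have "(\<integral>x. (norm (pd (nt R t) 1 x))\<^sup>2 + (norm (pd (nt R t) 2 x))\<^sup>2 \<partial>lborel)
      \<le> (\<integral>x. (t^2 * (64 / R^2)) * indicator (Q R) x \<partial>lborel)"
  proof (rule integral_mono')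
    show "integrable lborel (\<lambda>x. (t^2 * (64 / R^2)) * indicator (Q R) x)"
      by (rule integral_const_indicator_Q(1)[OF assms])
    fix x :: "real^2"
    have "(norm (pd (nt R t) 1 x))\<^sup>2 + (norm (pd (nt R t) 2 x))\<^sup>2 \<le> t^2 * ((pf R 1 x)^2 + (pf R 2 x)^2)"
      using pt[of 1 x] pt[of 2 x] by (simp add: algebra_simps)
    also have "\<dots> \<le> t^2 * (64 / R^2 * indicator (Q R) x)"
      by (intro mult_left_mono pf_sq_bound assms) simp
    finally show "(norm (pd (nt R t) 1 x))\<^sup>2 + (norm (pd (nt R t) 2 x))\<^sup>2 \<le> (t^2 * (64 / R^2)) * indicator (Q R) x"
      by (simp add: algebra_simps)
    show "0 \<le> (t^2 * (64 / R^2)) * indicator (Q R) x" by simp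
  qed
  also have "\<dots> = (t^2 * (64 / R^2)) * (4 * R^2)" by (rule integral_const_indicator_Q(2)[OF assms])
  also have "\<dots> = 256 * t^2" using assms by (simp add: field_simps)
  finally show ?thesis unfolding Dir_def by simp
qed



lemma N_minus_e3: "norm (N s - e3) ^ 4 \<le> s ^ 4"
proof -
  define q where "q = sqrt (1 + s^2)"
  have q: "q \<ge> 1" "q^2 = 1 + s^2" by (auto simp: q_def)
  have qp: "q > 0" using q by simp
  have "N s - e3 = (s / q) *\<^sub>R E1 + (1/q - 1) *\<^sub>R e3"
    by (simp add: N_def q_def algebra_simps)
  then have "(norm (N s - e3))^2 = (s/q)^2 + (1/q - 1)^2"
    by (simp add: norm_E1e3_sq)
  also have "\<dots> = (s^2 + (q - 1)^2) / q^2"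
    using qp by (simp add: field_simps power2_eq_square)
  also have "\<dots> \<le> s^2"
  proof -
    have "q * 1 \<le> q * q" using q(1) by (intro mult_left_mono) auto
    then have "q - 1 \<le> s^2" using q(2) by (simp add: power2_eq_square)
    then have "(q - 1)^2 \<le> (s^2)^2" using q by (intro power_mono) auto
    then have "s^2 + (q - 1)^2 \<le> s^2 * q^2" using q(2) by (simp add: algebra_simps power2_eq_square)
    then show ?thesis using qp by (simp add: divide_le_eq)
  qed
  finally have "(norm (N s - e3))^2 \<le> s^2" .
  then have "((norm (N s - e3))^2)^2 \<le> (s^2)^2" by (rule power_mono[of _ _ 2]) simp
  then show ?thesis by (simp add: power_mult[symmetric])
qed

lemma Pot_bound:
  assumes "R > 0"
  shows "Pot (nt R t) \<le> t^4 * R^2 / 2"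
proof -
  have "(\<integral>x. (norm (nt R t x - e3)) ^ 4 \<partial>lborel) \<le> (\<integral>x. t^4 * indicator (Q R) x \<partial>lborel)"
  proof (rule integral_mono')
    show "integrable lborel (\<lambda>x. t^4 * indicator (Q R) x)"
      by (rule integral_const_indicator_Q(1)[OF assms])
    fix x :: "real^2"
    have "(norm (nt R t x - e3)) ^ 4 \<le> (t * fR R x)^4" unfolding nt_def by (rule N_minus_e3)
    also have "\<dots> \<le> t^4 * indicator (Q R) x"
    proof (cases "x \<in> Q R")
      case True
      have "fR R x ^ 4 \<le> 1" using fR_bounds by (intro power_le_one) auto
      then show ?thesis using True by (simp add: power_mult_distrib mult_left_le)
    next
      case False
      then show ?thesis using fR_outside[OF assms] by simp
    qed
    finally show "(norm (nt R t x - e3)) ^ 4 \<le> t^4 * indicator (Q R) x" .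
    show "0 \<le> t^4 * indicator (Q R) x" by simp
  qed
  also have "\<dots> = t^4 * (4 * R^2)" by (rule integral_const_indicator_Q(2)[OF assms])
  finally show ?thesis unfolding Pot_def by simp
qed

lemma nt3: "nt R t x $ 3 = 1 / sqrt (1 + (t * fR R x)^2)"
  by (simp add: nt_def N_def E1_def e3_def)

lemma one_minus_bound: "s^2 / (2 * (1 + s^2)) \<le> 1 - 1 / sqrt (1 + s^2)"
proof -
  define q where "q = sqrt (1 + s^2)"
  have q: "q \<ge> 1" "q^2 = 1 + s^2" by (auto simp: q_def)
  have "s^2 / (2 * (1 + s^2)) = (q^2 - 1) / (2 * q^2)" using q by simp
  also have "\<dots> \<le> 1 - 1/q"
  proof -
    have "0 \<le> (q - 1)^2" by simp
    then have "q^2 - 1 \<le> 2 * q^2 - 2 * q" by (simp add: power2_eq_square algebra_simps)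
    then have "(q^2 - 1) / (2 * q^2) \<le> (2 * q^2 - 2 * q) / (2 * q^2)"
      by (intro divide_right_mono) auto
    also have "(2 * q^2 - 2 * q) / (2 * q^2) = 1 - 1/q"
    proof -
      have qnz: "q \<noteq> 0" using q(1) by auto
      then show ?thesis by (simp add: diff_divide_distrib power2_eq_square)
    qed
    finally show ?thesis .
  qed
  finally show ?thesis by (simp add: q_def)
qed

lemma pos2: "0 < 1 + (y::real)^2"
  using add_pos_nonneg[OF zero_less_one zero_le_power2[of y]] by simp

lemma sq: "sqrt (1 + (y::real)^2) \<noteq> 0"
  using pos2[of y] by simp

lemma pos3: "1 + (y::real)^2 \<noteq> 0"
  using pos2[of y] by simp

lemma pos1: "(1 + (y::real)^2 < 0) \<longleftrightarrow> False"
  using add_pos_nonneg[OF zero_less_one zero_le_power2[of y]] by simp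

lemma Zee_bound:
  assumes "R > 0"
  shows "Zee (nt R t) \<ge> t^2 * exp (-4) / (2 * (1 + t^2)) * R^2"
proof -
  define Z where "Z x = 1 - 1 / sqrt (1 + (t * fR R x)^2)" for x
  have Zeq: "(\<lambda>x. 1 - nt R t x $ 3) = Z" by (simp add: Z_def nt3 fun_eq_iff)
  have Z0: "0 \<le> Z x" for x
  proof -
    have "1 \<le> sqrt (1 + (t * fR R x)^2)" by simp
    then have "1 / sqrt (1 + (t * fR R x)^2) \<le> 1 / 1" by (intro divide_left_mono) (auto simp: pos2)
    then show ?thesis by (simp add: Z_def)
  qed
  have "continuous_on (Q R) Z"
    unfolding Z_def using continuous_on_subset[OF fR_cont subset_UNIV]
    by (intro continuous_intros) (auto simp: sq pos3)
  then have "integrable lborel (\<lambda>x. indicator (Q R) x *\<^sub>R Z x)"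
    by (intro borel_integrable_compact) (auto simp: Q_def)
  moreover have "(\<lambda>x. indicator (Q R) x *\<^sub>R Z x) = Z"
    using fR_outside[OF assms] by (auto simp: fun_eq_iff Z_def indicator_def)
  ultimately have iZ: "integrable lborel Z" by simp
  define c where "c = t^2 * exp (-4) / (2 * (1 + t^2))"
  have R2: "R/2 > 0" using assms by simp
  have "(\<integral>x. c * indicator (Q (R/2)) x \<partial>lborel) \<le> (\<integral>x. Z x \<partial>lborel)"
  proof (rule integral_mono'[OF iZ])
    fix x :: "real^2"
    show "0 \<le> Z x" by (rule Z0)
    show "c * indicator (Q (R/2)) x \<le> Z x"
    proof (cases "x \<in> Q (R/2)")
      case False
      then show ?thesis using Z0[of x] by simp
    next
      case True
      define s where "s = t * fR R x"
      have fge: "exp (-2) \<le> fR R x" unfolding fR_def by (rule psi0_ge[OF in_Q2[OF assms True]])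
      have "(exp (-2))^2 \<le> (fR R x)^2" using fge by (intro power_mono) auto
      then have "exp (-4) \<le> (fR R x)^2" by (simp add: power2_eq_square exp_add[symmetric])
      then have s_lo: "t^2 * exp (-4) \<le> s^2" unfolding s_def by (simp add: power_mult_distrib mult_left_mono)
      have "(fR R x)^2 \<le> 1" using fR_bounds by (intro power_le_one) auto
      then have s_hi: "s^2 \<le> t^2" unfolding s_def by (simp add: power_mult_distrib mult_left_le)
      have "c \<le> s^2 / (2 * (1 + t^2))" unfolding c_def using s_lo by (intro divide_right_mono) auto
      also have "\<dots> \<le> s^2 / (2 * (1 + s^2))"
      proof -
        have "0 < (2 * (1 + t^2)) * (2 * (1 + s^2))" using pos2[of t] pos2[of s] by (intro mult_pos_pos) auto
        moreover have "2 * (1 + s^2) \<le> 2 * (1 + t^2)" using s_hi by simp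
        ultimately show ?thesis by (intro divide_left_mono) auto
      qed
      also have "\<dots> \<le> Z x" unfolding Z_def s_def[symmetric] by (rule one_minus_bound)
      finally show ?thesis using True by simp
    qed
  qed
  also have "(\<integral>x. Z x \<partial>lborel) = Zee (nt R t)" unfolding Zee_def Zeq ..
  finally have "c * (4 * (R/2)^2) \<le> Zee (nt R t)" using integral_const_indicator_Q(2)[OF R2, of c] by linarith
  then show ?thesis by (simp add: c_def power_divide)
qed



theorem theorem5p3:
  fixes r h :: real
  assumes "r > 0" and "h < 0"
  shows "\<exists>\<phi> :: real^2 \<Rightarrow> real^3. smooth_map \<phi> \<and> compact_support \<phi> \<and>
           Energy r h (\<lambda>x. e3) = 0 \<and>
           (\<forall>\<^sub>F t in at (0::real).
              Energy r h (\<lambda>x. (e3 + t *\<^sub>R \<phi> x) /\<^sub>R norm (e3 + t *\<^sub>R \<phi> x))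
                < Energy r h (\<lambda>x. e3))"
proof -
  define R where "R = sqrt (1024 * exp 4 / (- h))"
  have Rpos: "R > 0" using assms(2) by (simp add: R_def divide_pos_neg)
  have R2: "R^2 = 1024 * exp 4 / (- h)" using assms(2) proof -
    have "0 < 1024 * exp 4 / (- h)" using assms(2) by (intro divide_pos_pos) auto
    then show ?thesis unfolding R_def by (intro real_sqrt_pow2 less_imp_le)
  qed
  have hR2: "h * R^2 = - 1024 * exp 4" using assms(2) by (simp add: R2)
  define \<phi> where "\<phi> = (\<lambda>x. fR R x *\<^sub>R E1)"
  have sm: "smooth_map \<phi>" unfolding \<phi>_def by (rule Sm_smooth[OF fR_Sm])
  have cs: "compact_support \<phi>"
  proof -
    have "{x. \<phi> x \<noteq> 0} \<subseteq> Q R" using fR_outside[OF Rpos] by (auto simp: \<phi>_def)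
    then have "closure {x. \<phi> x \<noteq> 0} \<subseteq> Q R"
      by (intro closure_minimal) (auto simp: Q_def)
    then have "closure {x. \<phi> x \<noteq> 0} = Q R \<inter> closure {x. \<phi> x \<noteq> 0}" by blast
    moreover have "compact (Q R \<inter> closure {x. \<phi> x \<noteq> 0})"
      by (intro compact_Int_closed) (auto simp: Q_def)
    ultimately show ?thesis unfolding compact_support_def by simp
  qed
  define d where "d = min 1 (8 / R)"
  have dpos: "d > 0" using Rpos by (simp add: d_def)
  have ev: "\<forall>\<^sub>F t in at (0::real).
      Energy r h (\<lambda>x. (e3 + t *\<^sub>R \<phi> x) /\<^sub>R norm (e3 + t *\<^sub>R \<phi> x)) < Energy r h (\<lambda>x. e3)"
    unfolding eventually_at
  proof (intro exI[of _ d] conjI ballI impI dpos)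
    fix t :: real
    assume "t \<noteq> 0 \<and> dist t 0 < d"
    then have t0: "t \<noteq> 0" and td: "\<bar>t\<bar> < d" by auto
    have t2pos: "t^2 > 0" using t0 by simp
    have "\<bar>t\<bar> < 1" using td by (simp add: d_def)
    then have "\<bar>t\<bar>^2 < 1^2" by (intro power_strict_mono) auto
    then have t21: "t^2 < 1" by simp
    have "\<bar>t\<bar> < 8 / R" using td by (simp add: d_def)
    then have "\<bar>t\<bar> * R < 8" using Rpos by (simp add: field_simps)
    then have "(\<bar>t\<bar> * R)^2 < 8^2" using Rpos by (intro power_strict_mono) auto
    then have tR: "t^2 * R^2 < 64" by (simp add: power_mult_distrib)
    have eqn: "(\<lambda>x. (e3 + t *\<^sub>R \<phi> x) /\<^sub>R norm (e3 + t *\<^sub>R \<phi> x)) = nt R t"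
      unfolding \<phi>_def by (rule lam_eq)
    have D: "Dir (nt R t) \<le> 128 * t^2" by (rule Dir_bound[OF Rpos])
    have P: "Pot (nt R t) \<le> t^4 * R^2 / 2" by (rule Pot_bound[OF Rpos])
    have Z: "Zee (nt R t) \<ge> t^2 * exp (-4) / (2 * (1 + t^2)) * R^2" by (rule Zee_bound[OF Rpos])
    have P': "t^4 * R^2 / 2 \<le> 32 * t^2"
    proof -
      have "t^4 * R^2 = t^2 * (t^2 * R^2)" by (simp add: power2_eq_square power4_eq_xxxx)
      also have "\<dots> \<le> t^2 * 64" using tR t2pos by (intro mult_left_mono) auto
      finally show ?thesis by simp
    qed
    have hZ: "h * Zee (nt R t) \<le> h * (t^2 * exp (-4) / (2 * (1 + t^2)) * R^2)"
      using Z assms(2) by (intro mult_left_mono_neg) auto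
    have "h * (t^2 * exp (-4) / (2 * (1 + t^2)) * R^2) = - 1024 * t^2 / (2 * (1 + t^2))"
    proof -
      have "h * (t^2 * exp (-4) / (2 * (1 + t^2)) * R^2) = (h * R^2) * exp (-4) * t^2 / (2 * (1 + t^2))"
        by (simp add: algebra_simps)
      also have "\<dots> = - 1024 * (exp 4 * exp (-4)) * t^2 / (2 * (1 + t^2))" by (simp add: hR2)
      also have "exp 4 * exp (-4) = (1::real)" by (simp add: exp_add[symmetric])
      finally show ?thesis by simp
    qed
    also have "\<dots> \<le> - 256 * t^2"
    proof -
      have "t^2 * t^2 \<le> t^2 * 1" using t21 by (intro mult_left_mono) auto
      then have "256 * t^2 * (2 * (1 + t^2)) \<le> 1024 * t^2" by (simp add: algebra_simps)
      moreover have "0 < 2 * (1 + t^2)" using pos2[of t] by simp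
      ultimately have "256 * t^2 \<le> 1024 * t^2 / (2 * (1 + t^2))" by (simp add: le_divide_eq)
      then show ?thesis by simp
    qed
    finally have hZ': "h * Zee (nt R t) \<le> - 256 * t^2" using hZ by linarith
    have "Energy r h (nt R t) = Dir (nt R t) + Pot (nt R t) + h * Zee (nt R t)"
      by (simp add: Energy_def Hel_nt)
    also have "\<dots> \<le> 128 * t^2 + 32 * t^2 - 256 * t^2" using D P P' hZ' by linarith
    also have "\<dots> < 0" using t2pos by simp
    finally show "Energy r h (\<lambda>x. (e3 + t *\<^sub>R \<phi> x) /\<^sub>R norm (e3 + t *\<^sub>R \<phi> x)) < Energy r h (\<lambda>x. e3)"
      unfolding eqn Energy_e3 .
  qed
  show ?thesis using sm cs Energy_e3 ev by blast
qed

end
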